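(* Let $B$ be a real $Q\times Q$ matrix that is symmetric, positive definite, and satisfies $B_{pq}\le0$ for $p\ne q$, and assume $\rho\in\mathcal R(\mathcal S^e,\pi^e,e\in\mathcal E)$. Let $(t_c)_{c\ge1}$ be an increasing unbounded sequence of times with $\lim_{c\to\infty}X(t_c)/t_c=\eta\ne0$. Let $(s_c)_{c\ge1}$ be times satisfying: 1. $s_c<t_c$ for each $c$, and $\lim_{c\to\infty}(t_c-s_c)/t_c=\epsilon\in(0,1)$; 2. for each $c$ and almost every $t\in(s_c,t_c]$, the applied service vector satisfies $\langle S(t),B\eta\rangle=\max_{S'\in\mathcal S^{e(t)}}\langle S',B\eta\rangle$. Then there is a subsequence $(s_d)$ of $(s_c)$ along which $X(s_d)/s_d\to\psi$ for some $\psi\in\mathbb R^Q_{\ge0}$ with $\langle\psi,B\eta\rangle>\langle\eta,B\eta\rangle$ and $\langle\psi,B\psi\rangle>\langle\eta,B\eta\rangle$. In particular, $$\limsup_{t\to\infty}\Big\langle\frac{X(t)}{t},B\frac{X(t)}{t}\Big\rangle>\langle\eta,B\eta\rangle .$$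
   Context: Fix integers $Q\ge1$ and $E\ge1$; queues are indexed by $q\in\mathcal Q=\{1,\dots,Q\}$ and environment states by $e\in\mathcal E=\{1,\dots,E\}$. For each $e$, $\mathcal S^e\subset\mathbb R^Q$ is a finite nonempty complete set of service vectors (components may be negative). Complete means that if $S\in\mathcal S^e$ and $S_q>0$, then replacing $S_q$ by $0$ gives a vector in $\mathcal S^e$. An environment trace is a measurable map $e:[0,\infty)\to\mathcal E$ with time proportions $\pi^e=\lim_{t\to\infty}\frac1t\int_0^t\mathbf 1\{e(z)=e\}\,dz>0$, where $\sum_e\pi^e=1$. The cumulative arrival $N(t)\in\mathbb R^Q_{\ge0}$ is componentwise nondecreasing with left limits, with traffic load $\rho=\lim_{t\to\infty}N(t)/t$. A schedule is a measurable map $S:[0,\infty)\to\mathbb R^Q$ with $S(t)\in\mathcal S^{e(t)}$. The workload is $X(t)=X(0)+N(t)-\int_0^tS(z)\,dz\ge0$. The stability region is $$\mathcal R(\mathcal S^e,\pi^e,e\in\mathcal E)=\Big\{\rho\in\mathbb R^Q_{\ge0}:\rho\le\sum_e\pi^e\sum_{S\in\mathcal S^e}\phi^e_SS \text{ for some } \phi^e_S\ge0,\ \sum_{S\in\mathcal S^e}\phi^e_S=1\Big\},$$ where the inequality is componentwise. *)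

theory Defs
  imports "HOL-Analysis.Analysis"
begin

definition complete_service_set :: "(real^'q) set \<Rightarrow> bool" where
  "complete_service_set A \<longleftrightarrow>
     (\<forall>S\<in>A. \<forall>q. S $ q > 0 \<longrightarrow> (\<chi> i. if i = q then 0 else S $ i) \<in> A)"

definition stab_region :: "('e::finite \<Rightarrow> (real^'q) set) \<Rightarrow> ('e \<Rightarrow> real) \<Rightarrow> (real^'q) set" where
  "stab_region Sset \<pi> =
     {\<rho>. (\<forall>i. 0 \<le> \<rho> $ i) \<and>
          (\<exists>\<phi> :: 'e \<Rightarrow> real^'q \<Rightarrow> real.
             (\<forall>e. \<forall>S\<in>Sset e. 0 \<le> \<phi> e S) \<and>
             (\<forall>e. (\<Sum>S\<in>Sset e. \<phi> e S) = 1) \<and>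
             (\<forall>i. \<rho> $ i \<le> (\<Sum>e\<in>UNIV. \<pi> e * (\<Sum>S\<in>Sset e. \<phi> e S * S $ i))))}"

end

theory Submission imports Defs begin

lemma integrable_helper:
 fixes f :: "real \<Rightarrow> 'b::euclidean_space"
 assumes f: "f \<in> borel_measurable (restrict_space lborel {0..})" and b: "\<And>z. 0 \<le> z \<Longrightarrow> norm (f z) \<le> K" and a: "0 \<le> a"
 shows "f integrable_on {a..b}"
proof (rule measurable_bounded_by_integrable_imp_integrable[where g="\<lambda>_. K"])
  have "f \<in> borel_measurable (restrict_space lborel {a..b})"
    using measurable_restrict_mono[OF f] a by auto
  moreover have "id \<in> restrict_space lebesgue {a..b} \<rightarrow>\<^sub>M restrict_space lborel {a..b}"
    by (rule measurable_restrict_space3) (auto intro!: measurable_completion)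
  ultimately show "f \<in> borel_measurable (lebesgue_on {a..b})"
    using measurable_comp by (metis comp_id id_comp)
  show "(\<lambda>_. K) integrable_on {a..b}" by (rule integrable_const_ivl)
  show "norm (f x) \<le> K" if "x \<in> {a..b}" for x using b a that by auto
qed auto


lemma zero_coords:
  fixes A :: "(real^'q::finite) set"
  assumes c: "complete_service_set A" and S: "S \<in> A"
  shows "\<exists>S'\<in>A. \<forall>q. S' $ q = (if q \<in> J \<and> S $ q > 0 then 0 else S $ q)"
proof -
  have "finite J" by simp
  then show ?thesis
  proof (induction J rule: finite_induct)
    case empty then show ?case using S by auto
  next
    case (insert j J)
    then obtain S' where S': "S' \<in> A" "\<forall>q. S' $ q = (if q \<in> J \<and> S $ q > 0 then 0 else S $ q)" by blast
    show ?case
    proof (cases "S' $ j > 0")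
      case True
      let ?S2 = "\<chi> i. if i = j then 0 else S' $ i"
      have "?S2 \<in> A" using c True S'(1) unfolding complete_service_set_def by blast
      moreover have "\<forall>q. ?S2 $ q = (if q \<in> insert j J \<and> S $ q > 0 then 0 else S $ q)"
        using S'(2) True by (auto split: if_splits)
      ultimately show ?thesis by blast
    next
      case False
      have "\<forall>q. S' $ q = (if q \<in> insert j J \<and> S $ q > 0 then 0 else S $ q)"
        using S'(2) False by (auto split: if_splits)
      then show ?thesis using S'(1) by blast
    qed
  qed
qed

lemma region_bound:
  fixes Sset :: "'e::finite \<Rightarrow> (real^'q::finite) set"
  assumes fin: "\<And>e. finite (Sset e)" and comp: "\<And>e. complete_service_set (Sset e)"
    and pi: "\<And>e. \<pi> e \<ge> 0" and rho: "\<rho> \<in> stab_region Sset \<pi>"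
  shows "\<rho> \<bullet> w \<le> (\<Sum>e\<in>UNIV. \<pi> e * Max ((\<lambda>S'. S' \<bullet> w) ` Sset e))"
proof -
  obtain \<phi> where phi0: "\<And>e S. S \<in> Sset e \<Longrightarrow> 0 \<le> \<phi> e S"
    and phi1: "\<And>e. (\<Sum>S\<in>Sset e. \<phi> e S) = 1"
    and rle: "\<And>i. \<rho> $ i \<le> (\<Sum>e\<in>UNIV. \<pi> e * (\<Sum>S\<in>Sset e. \<phi> e S * S $ i))"
    and rnn: "\<And>i. 0 \<le> \<rho> $ i"
    using rho unfolding stab_region_def by auto
  define J where "J = {q. w $ q < 0}"
  have "\<forall>e. \<forall>S\<in>Sset e. \<exists>S'\<in>Sset e. \<forall>q. S' $ q = (if q \<in> J \<and> S $ q > 0 then 0 else S $ q)"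
    using zero_coords comp by blast
  then obtain Z where Z: "\<And>e S. S \<in> Sset e \<Longrightarrow> Z e S \<in> Sset e"
    "\<And>e S q. S \<in> Sset e \<Longrightarrow> Z e S $ q = (if q \<in> J \<and> S $ q > 0 then 0 else S $ q)"
    by metis
  define m where "m e = Max ((\<lambda>S'. S' \<bullet> w) ` Sset e)" for e
  have q: "\<rho> $ i * w $ i \<le> (\<Sum>e\<in>UNIV. \<pi> e * (\<Sum>S\<in>Sset e. \<phi> e S * (Z e S $ i * w $ i)))" for i
  proof (cases "w $ i < 0")
    case True
    have "\<rho> $ i * w $ i \<le> 0" using True rnn[of i] by (simp add: mult_nonneg_nonpos2 mult_le_0_iff)
    also have "0 \<le> (\<Sum>e\<in>UNIV. \<pi> e * (\<Sum>S\<in>Sset e. \<phi> e S * (Z e S $ i * w $ i)))"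
    proof (rule sum_nonneg, rule mult_nonneg_nonneg[OF pi], rule sum_nonneg)
      fix e S assume "S \<in> Sset e"
      then have "Z e S $ i \<le> 0" using Z(2)[of S e i] True by (auto simp: J_def)
      then show "0 \<le> \<phi> e S * (Z e S $ i * w $ i)"
        using phi0[OF \<open>S \<in> Sset e\<close>] True by (simp add: mult_nonpos_nonpos)
    qed
    finally show ?thesis .
  next
    case False
    have "\<rho> $ i * w $ i \<le> (\<Sum>e\<in>UNIV. \<pi> e * (\<Sum>S\<in>Sset e. \<phi> e S * S $ i)) * w $ i"
      using rle[of i] False by (simp add: mult_right_mono)
    also have "\<dots> = (\<Sum>e\<in>UNIV. \<pi> e * (\<Sum>S\<in>Sset e. \<phi> e S * (Z e S $ i * w $ i)))"
      using False Z(2) by (simp add: sum_distrib_right sum_distrib_left J_def mult.assoc cong: sum.cong)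
    finally show ?thesis .
  qed
  have "\<rho> \<bullet> w = (\<Sum>i\<in>UNIV. \<rho> $ i * w $ i)" by (simp add: inner_vec_def)
  also have "\<dots> \<le> (\<Sum>i\<in>UNIV. \<Sum>e\<in>UNIV. \<pi> e * (\<Sum>S\<in>Sset e. \<phi> e S * (Z e S $ i * w $ i)))"
    by (rule sum_mono) (rule q)
  also have "\<dots> = (\<Sum>e\<in>UNIV. \<pi> e * (\<Sum>S\<in>Sset e. \<phi> e S * (Z e S \<bullet> w)))"
  proof -
    have "(\<Sum>i\<in>UNIV. \<Sum>e\<in>UNIV. \<pi> e * (\<Sum>S\<in>Sset e. \<phi> e S * (Z e S $ i * w $ i)))
       = (\<Sum>e\<in>UNIV. \<Sum>i\<in>UNIV. \<pi> e * (\<Sum>S\<in>Sset e. \<phi> e S * (Z e S $ i * w $ i)))"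
      by (rule sum.swap)
    also have "\<dots> = (\<Sum>e\<in>UNIV. \<pi> e * (\<Sum>S\<in>Sset e. \<phi> e S * (Z e S \<bullet> w)))"
    proof (rule sum.cong[OF refl])
      fix e
      have "(\<Sum>i\<in>UNIV. \<pi> e * (\<Sum>S\<in>Sset e. \<phi> e S * (Z e S $ i * w $ i)))
          = \<pi> e * (\<Sum>i\<in>UNIV. \<Sum>S\<in>Sset e. \<phi> e S * (Z e S $ i * w $ i))"
        by (rule sum_distrib_left[symmetric])
      also have "(\<Sum>i\<in>UNIV. \<Sum>S\<in>Sset e. \<phi> e S * (Z e S $ i * w $ i))
           = (\<Sum>S\<in>Sset e. \<Sum>i\<in>UNIV. \<phi> e S * (Z e S $ i * w $ i))"
        by (rule sum.swap)
      also have "\<dots> = (\<Sum>S\<in>Sset e. \<phi> e S * (Z e S \<bullet> w))"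
        by (simp add: inner_vec_def sum_distrib_left)
      finally show "(\<Sum>i\<in>UNIV. \<pi> e * (\<Sum>S\<in>Sset e. \<phi> e S * (Z e S $ i * w $ i)))
          = \<pi> e * (\<Sum>S\<in>Sset e. \<phi> e S * (Z e S \<bullet> w))" .
    qed
    finally show ?thesis .
  qed
  also have "\<dots> \<le> (\<Sum>e\<in>UNIV. \<pi> e * (\<Sum>S\<in>Sset e. \<phi> e S * m e))"
  proof (rule sum_mono, rule mult_left_mono[OF _ pi], rule sum_mono)
    fix e S assume S: "S \<in> Sset e"
    have "Z e S \<bullet> w \<le> m e" unfolding m_def using Z(1)[OF S] fin by (intro Max_ge) auto
    then show "\<phi> e S * (Z e S \<bullet> w) \<le> \<phi> e S * m e" using phi0[OF S] by (simp add: mult_left_mono)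
  qed
  also have "\<dots> = (\<Sum>e\<in>UNIV. \<pi> e * m e)"
    using phi1 by (simp add: sum_distrib_right[symmetric])
  finally show ?thesis unfolding m_def .
qed

lemma sym_inner:
  fixes B :: "real^'q::finite^'q"
  assumes "transpose B = B"
  shows "x \<bullet> (B *v y) = y \<bullet> (B *v x)"
proof -
  have "x \<bullet> (B *v y) = (x v* B) \<bullet> y" by (simp add: dot_lmul_matrix)
  also have "x v* B = B *v x" using vector_transpose_matrix[of x B] assms by simp
  finally show ?thesis by (simp add: inner_commute)
qed

lemma quad_ineq:
  fixes B :: "real^'q::finite^'q"
  assumes sym: "transpose B = B" and pd: "\<And>x. x \<noteq> 0 \<Longrightarrow> 0 < x \<bullet> (B *v x)"
    and h: "\<psi> \<bullet> (B *v \<eta>) > \<eta> \<bullet> (B *v \<eta>)"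
  shows "\<psi> \<bullet> (B *v \<psi>) > \<eta> \<bullet> (B *v \<eta>)"
proof -
  have "0 \<le> (\<psi> - \<eta>) \<bullet> (B *v (\<psi> - \<eta>))" using pd[of "\<psi> - \<eta>"] by (cases "\<psi> = \<eta>") auto
  also have "\<dots> = \<psi> \<bullet> (B *v \<psi>) - \<psi> \<bullet> (B *v \<eta>) - \<eta> \<bullet> (B *v \<psi>) + \<eta> \<bullet> (B *v \<eta>)"
    by (simp add: matrix_vector_mult_diff_distrib inner_diff_left inner_diff_right)
  also have "\<eta> \<bullet> (B *v \<psi>) = \<psi> \<bullet> (B *v \<eta>)" using sym_inner[OF sym] by blast
  finally show ?thesis using h by linarith
qed

lemma limsup_gt:
  fixes f :: "real \<Rightarrow> real"
  assumes lim: "(\<lambda>n. f (u n)) \<longlonglongrightarrow> l" and u: "filterlim u at_top sequentially" and c: "c < l"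
  shows "Limsup at_top (\<lambda>T. ereal (f T)) > ereal c"
proof (rule ccontr)
  assume "\<not> ?thesis"
  then have "Limsup at_top (\<lambda>T. ereal (f T)) \<le> ereal c" by simp
  moreover have "ereal c < ereal ((c + l)/2)" using c by simp
  ultimately have "Limsup at_top (\<lambda>T. ereal (f T)) < ereal ((c + l)/2)" by (rule le_less_trans)
  then have "eventually (\<lambda>T. ereal (f T) < ereal ((c+l)/2)) at_top" by (rule Limsup_lessD)
  then have "eventually (\<lambda>n. f (u n) < (c+l)/2) sequentially"
    using filterlim_iff u by fastforce
  moreover have "eventually (\<lambda>n. f (u n) > (c+l)/2) sequentially"
    using lim c by (intro order_tendstoD) auto
  ultimately have "eventually (\<lambda>n. False) sequentially" by eventually_elim auto
  then show False by simp
qed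

theorem lemma4:
  fixes Sset :: "'e::finite \<Rightarrow> (real^'q::finite) set"
    and env :: "real \<Rightarrow> 'e"
    and \<pi> :: "'e \<Rightarrow> real"
    and N :: "real \<Rightarrow> real^'q"
    and \<rho> :: "real^'q"
    and S :: "real \<Rightarrow> real^'q"
    and X :: "real \<Rightarrow> real^'q"
    and B :: "real^'q^'q"
    and t s :: "nat \<Rightarrow> real"
    and \<eta> :: "real^'q"
    and \<epsilon> :: real
  assumes Sset_finite: "\<And>e. finite (Sset e)"
    and Sset_nonempty: "\<And>e. Sset e \<noteq> {}"
    and Sset_complete: "\<And>e. complete_service_set (Sset e)"
    and env_meas: "env \<in> measurable (restrict_space lborel {0..}) (count_space UNIV)"
    and env_prop: "\<And>e. ((\<lambda>T. (1 / T) * integral {0..T} (\<lambda>z. if env z = e then 1 else 0)) \<longlongrightarrow> \<pi> e) at_top"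
    and \<pi>_pos: "\<And>e. \<pi> e > 0"
    and \<pi>_sum: "(\<Sum>e\<in>UNIV. \<pi> e) = 1"
    and N_nonneg: "\<And>T i. 0 \<le> T \<Longrightarrow> 0 \<le> N T $ i"
    and N_mono: "\<And>T T' i. 0 \<le> T \<Longrightarrow> T \<le> T' \<Longrightarrow> N T $ i \<le> N T' $ i"
    and N_left_lim: "\<And>T. 0 < T \<Longrightarrow> \<exists>l. (N \<longlongrightarrow> l) (at_left T)"
    and load: "((\<lambda>T. N T /\<^sub>R T) \<longlongrightarrow> \<rho>) at_top"
    and S_meas: "S \<in> borel_measurable (restrict_space lborel {0..})"
    and S_feasible: "\<And>T. 0 \<le> T \<Longrightarrow> S T \<in> Sset (env T)"
    and X_def: "\<And>T. 0 \<le> T \<Longrightarrow> X T = X 0 + N T - integral {0..T} S"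
    and X_nonneg: "\<And>T i. 0 \<le> T \<Longrightarrow> 0 \<le> X T $ i"
    and B_sym: "transpose B = B"
    and B_posdef: "\<And>x. x \<noteq> 0 \<Longrightarrow> 0 < x \<bullet> (B *v x)"
    and B_offdiag: "\<And>p q. p \<noteq> q \<Longrightarrow> B $ p $ q \<le> 0"
    and \<rho>_stab: "\<rho> \<in> stab_region Sset \<pi>"
    and t_mono: "strict_mono t"
    and t_unbounded: "filterlim t at_top sequentially"
    and t_lim: "(\<lambda>c. X (t c) /\<^sub>R t c) \<longlonglongrightarrow> \<eta>"
    and \<eta>_nz: "\<eta> \<noteq> 0"
    and s_nonneg: "\<And>c. 0 \<le> s c"
    and s_less: "\<And>c. s c < t c"
    and s_lim: "(\<lambda>c. (t c - s c) / t c) \<longlonglongrightarrow> \<epsilon>"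
    and \<epsilon>_range: "0 < \<epsilon>" "\<epsilon> < 1"
    and maxweight: "\<And>c. AE T in lborel. T \<in> {s c<..t c} \<longrightarrow>
                      S T \<bullet> (B *v \<eta>) = Max ((\<lambda>S'. S' \<bullet> (B *v \<eta>)) ` Sset (env T))"
  shows "(\<exists>r \<psi>. strict_mono r \<and> (\<forall>i. 0 \<le> \<psi> $ i) \<and>
            (\<lambda>d. X (s (r d)) /\<^sub>R s (r d)) \<longlonglongrightarrow> \<psi> \<and>
            \<psi> \<bullet> (B *v \<eta>) > \<eta> \<bullet> (B *v \<eta>) \<and>
            \<psi> \<bullet> (B *v \<psi>) > \<eta> \<bullet> (B *v \<eta>))
         \<and> Limsup at_top (\<lambda>T. ereal ((X T /\<^sub>R T) \<bullet> (B *v (X T /\<^sub>R T))))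
             > ereal (\<eta> \<bullet> (B *v \<eta>))"
proof -
  define w where "w = B *v \<eta>"
  define m where "m e = Max ((\<lambda>S'. S' \<bullet> w) ` Sset e)" for e
  define ind where "ind e = (\<lambda>z. if env z = e then 1 else (0::real))" for e
  define I where "I e T = integral {0..T} (ind e)" for e T
  define M where "M = Max (norm ` (\<Union>e. Sset e))"
  have finU: "finite (\<Union>e. Sset e)" using Sset_finite by simp
  have normS: "norm (S T) \<le> M" if "0 \<le> T" for T
  proof -
    have "S T \<in> (\<Union>e. Sset e)" using S_feasible[OF that] by blast
    then show ?thesis unfolding M_def using finU by (intro Max_ge) auto
  qed
  have M0: "0 \<le> M" using normS[of 0] norm_ge_zero[of "S 0"] by linarith
  have intS: "S integrable_on {a..b}" if "0 \<le> a" for a b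
    by (rule integrable_helper[OF S_meas normS that])
  have ind_meas: "ind e \<in> borel_measurable (restrict_space lborel {0..})" for e
  proof -
    have "(\<lambda>x. if x = e then 1 else (0::real)) \<in> count_space UNIV \<rightarrow>\<^sub>M borel" by simp
    from measurable_compose[OF env_meas this] show ?thesis unfolding ind_def by simp
  qed
  have intInd: "ind e integrable_on {a..b}" if "0 \<le> a" for a b e
    by (rule integrable_helper[where K=1, OF ind_meas _ that]) (simp add: ind_def)
  have tpos: "0 < t c" for c using s_nonneg[of c] s_less[of c] by linarith
  have key: "X (t c) \<bullet> w - X (s c) \<bullet> w = N (t c) \<bullet> w - N (s c) \<bullet> w - (\<Sum>e\<in>UNIV. m e * (I e (t c) - I e (s c)))" for c
  proof -
    define a where "a = s c"
    define b where "b = t c"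
    have a0: "0 \<le> a" and ab: "a \<le> b" using s_nonneg[of c] s_less[of c] by (auto simp: a_def b_def)
    have comb: "integral {0..a} S + integral {a..b} S = integral {0..b} S"
      by (rule Henstock_Kurzweil_Integration.integral_combine[OF a0 ab intS[OF order_refl]])
    have Xdiff: "X b - X a = N b - N a - integral {a..b} S"
    proof -
      have "X b - X a = (X 0 + N b - integral {0..b} S) - (X 0 + N a - integral {0..a} S)"
        using X_def[of a] X_def[of b] a0 ab by simp
      also have "\<dots> = N b - N a - (integral {0..b} S - integral {0..a} S)" by (simp add: algebra_simps)
      also have "integral {0..b} S - integral {0..a} S = integral {a..b} S" using comb by (metis add_diff_cancel_left')
      finally show ?thesis .
    qed
    have lin: "integral {a..b} S \<bullet> w = integral {a..b} (\<lambda>z. S z \<bullet> w)"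
      using integral_linear[OF intS[OF a0] bounded_linear_inner_left[of w]] by (simp add: o_def)
    obtain N0 where N0: "N0 \<in> null_sets lborel"
      "{T \<in> space lborel. \<not> (T \<in> {s c<..t c} \<longrightarrow> S T \<bullet> (B *v \<eta>) = Max ((\<lambda>S'. S' \<bullet> (B *v \<eta>)) ` Sset (env T)))} \<subseteq> N0"
    proof -
      from AE_E[OF maxweight[of c]] obtain N1 where
        "{T \<in> space lborel. \<not> (T \<in> {s c<..t c} \<longrightarrow> S T \<bullet> (B *v \<eta>) = Max ((\<lambda>S'. S' \<bullet> (B *v \<eta>)) ` Sset (env T)))} \<subseteq> N1"
        "emeasure lborel N1 = 0" "N1 \<in> sets lborel" by blast
      then show thesis using that[of N1] by blast
    qed
    have negN0: "negligible N0" using N0(1)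
      by (simp add: negligible_iff_null_sets null_sets_completionI)
    have spike: "integral {a..b} (\<lambda>z. S z \<bullet> w) = integral {a..b} (\<lambda>z. m (env z))"
    proof (rule integral_spike[of "N0 \<union> {a}"])
      show "negligible (N0 \<union> {a})" using negN0 by simp
      fix x assume "x \<in> {a..b} - (N0 \<union> {a})"
      then have "x \<in> {s c<..t c}" "x \<notin> N0" by (auto simp: a_def b_def)
      then show "m (env x) = S x \<bullet> w" using N0(2) unfolding m_def w_def by auto
    qed
    have sumeq: "(\<lambda>z. m (env z)) = (\<lambda>z. \<Sum>e\<in>UNIV. m e * ind e z)"
      by (rule ext) (simp add: ind_def if_distrib sum.delta' cong: if_cong)
    have "integral {a..b} (\<lambda>z. \<Sum>e\<in>UNIV. m e * ind e z) = (\<Sum>e\<in>UNIV. integral {a..b} (\<lambda>z. m e * ind e z))"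
      by (rule integral_sum) (auto intro!: integrable_on_mult_right intInd a0)
    also have "\<dots> = (\<Sum>e\<in>UNIV. m e * (I e b - I e a))"
    proof (rule sum.cong[OF refl])
      fix e
      have "integral {0..a} (ind e) + integral {a..b} (ind e) = integral {0..b} (ind e)"
        by (rule Henstock_Kurzweil_Integration.integral_combine[OF a0 ab intInd[OF order_refl]])
      then have "integral {a..b} (ind e) = I e b - I e a" unfolding I_def by simp
      then show "integral {a..b} (\<lambda>z. m e * ind e z) = m e * (I e b - I e a)"
        using integral_mult[OF intInd[where b=b and e=e, OF a0], of "m e"] by simp
    qed
    finally have "integral {a..b} S \<bullet> w = (\<Sum>e\<in>UNIV. m e * (I e b - I e a))"
      using lin spike sumeq by simp
    moreover have "(X b - X a) \<bullet> w = (N b - N a) \<bullet> w - integral {a..b} S \<bullet> w"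
      using Xdiff by (simp add: inner_diff_left)
    ultimately show ?thesis by (simp add: a_def b_def inner_diff_left)
  qed
  have tnz: "t c \<noteq> 0" for c using tpos[of c] by simp
  have st: "(\<lambda>c. s c / t c) \<longlonglongrightarrow> 1 - \<epsilon>"
  proof -
    have "(\<lambda>c. 1 - (t c - s c) / t c) \<longlonglongrightarrow> 1 - \<epsilon>" by (intro tendsto_intros s_lim)
    moreover have "(\<lambda>c. 1 - (t c - s c) / t c) = (\<lambda>c. s c / t c)"
      using tnz by (intro ext) (simp add: field_simps)
    ultimately show ?thesis by simp
  qed
  have s_inf: "filterlim s at_top sequentially"
  proof -
    have "filterlim (\<lambda>c. s c / t c * t c) at_top sequentially"
      by (rule filterlim_tendsto_pos_mult_at_top[OF st _ t_unbounded]) (use \<epsilon>_range in simp)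
    moreover have "(\<lambda>c. s c / t c * t c) = s" using tnz by (intro ext) (simp add: field_simps)
    ultimately show ?thesis by simp
  qed
  have bndX: "norm (X T /\<^sub>R T) \<le> norm (X 0) + nr + M" if T1: "1 \<le> T" and nT: "norm (N T /\<^sub>R T) < nr" for T nr
  proof -
    have T0: "0 \<le> T" using T1 by simp
    have ib: "norm (integral {0..T} S) \<le> M * T"
      using has_integral_bound[OF M0, of S "integral {0..T} S" 0 T] integrable_integral[OF intS[of 0 T]] normS T0
      by (simp add: content_real)
    have eq: "X T /\<^sub>R T = X 0 /\<^sub>R T + N T /\<^sub>R T - integral {0..T} S /\<^sub>R T"
      by (subst X_def[OF T0]) (simp add: scaleR_diff_right scaleR_add_right)
    have "norm (X T /\<^sub>R T) \<le> norm (X 0 /\<^sub>R T) + norm (N T /\<^sub>R T) + norm (integral {0..T} S /\<^sub>R T)"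
      unfolding eq using norm_triangle_ineq4[of "X 0 /\<^sub>R T + N T /\<^sub>R T" "integral {0..T} S /\<^sub>R T"]
        norm_triangle_ineq[of "X 0 /\<^sub>R T" "N T /\<^sub>R T"] by linarith
    moreover have "norm (X 0 /\<^sub>R T) \<le> norm (X 0)"
    proof -
      have "inverse T \<le> 1" "0 \<le> inverse T" using T1 by (auto simp: inverse_le_1_iff)
      then show ?thesis by (simp add: mult_left_le_one_le)
    qed
    moreover have "norm (integral {0..T} S /\<^sub>R T) \<le> M"
    proof -
      have "norm (integral {0..T} S /\<^sub>R T) = norm (integral {0..T} S) / T" using T0 by (simp add: divide_inverse_commute)
      also have "\<dots> \<le> M" using ib T1 by (simp add: pos_divide_le_eq)
      finally show ?thesis .
    qed
    ultimately show ?thesis using nT by linarith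
  qed
  have bseq: "Bseq (\<lambda>c. X (s c) /\<^sub>R s c)"
  proof (rule Bseq_eventually_mono[where g="\<lambda>_. norm (X 0) + (norm \<rho> + 1) + M"])
    have "eventually (\<lambda>T. norm (N T /\<^sub>R T) < norm \<rho> + 1) at_top"
      using order_tendstoD(2)[OF tendsto_norm[OF load], of "norm \<rho> + 1"] by simp
    then have e1: "eventually (\<lambda>c. norm (N (s c) /\<^sub>R s c) < norm \<rho> + 1) sequentially"
      using s_inf filterlim_iff by fastforce
    have e2: "eventually (\<lambda>c. 1 \<le> s c) sequentially"
      using s_inf by (simp add: filterlim_at_top)
    show "eventually (\<lambda>c. norm (X (s c) /\<^sub>R s c) \<le> norm (norm (X 0) + (norm \<rho> + 1) + M)) sequentially"
      using e1 e2
    proof eventually_elim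
      case (elim c)
      then show ?case using bndX[of "s c" "norm \<rho> + 1"] M0 by simp
    qed
  qed simp
  obtain r \<psi> where r: "strict_mono r" and lim0: "((\<lambda>c. X (s c) /\<^sub>R s c) \<circ> r) \<longlonglongrightarrow> \<psi>"
    using bounded_imp_convergent_subsequence[of "\<lambda>c. X (s c) /\<^sub>R s c"] bseq
    by (auto simp: Bseq_eq_bounded)
  have limX: "(\<lambda>d. X (s (r d)) /\<^sub>R s (r d)) \<longlonglongrightarrow> \<psi>" using lim0 by (simp add: o_def)
  have psi_nn: "\<forall>i. 0 \<le> \<psi> $ i"
  proof
    fix i
    have "(\<lambda>d. (X (s (r d)) /\<^sub>R s (r d)) $ i) \<longlonglongrightarrow> \<psi> $ i" by (rule tendsto_vec_nth[OF limX])
    moreover have "0 \<le> (X (s (r d)) /\<^sub>R s (r d)) $ i" for d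
      using X_nonneg[OF s_nonneg, of "r d" i] s_nonneg[of "r d"] by simp
    ultimately show "0 \<le> \<psi> $ i" by (intro tendsto_lowerbound[of _ _ sequentially]) auto
  qed
  have r_lim: "filterlim r sequentially sequentially" by (rule filterlim_subseq[OF r])
  have tr_inf: "filterlim (\<lambda>d. t (r d)) at_top sequentially" by (rule filterlim_compose[OF t_unbounded r_lim])
  have sr_inf: "filterlim (\<lambda>d. s (r d)) at_top sequentially" by (rule filterlim_compose[OF s_inf r_lim])
  have str: "(\<lambda>d. s (r d) / t (r d)) \<longlonglongrightarrow> 1 - \<epsilon>" using LIMSEQ_subseq_LIMSEQ[OF st r] by (simp add: o_def)
  have limXt: "(\<lambda>d. X (t (r d)) /\<^sub>R t (r d)) \<longlonglongrightarrow> \<eta>" using LIMSEQ_subseq_LIMSEQ[OF t_lim r] by (simp add: o_def)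
  have limNt: "(\<lambda>d. N (t (r d)) /\<^sub>R t (r d)) \<longlonglongrightarrow> \<rho>" by (rule filterlim_compose[OF load tr_inf])
  have limNs: "(\<lambda>d. N (s (r d)) /\<^sub>R s (r d)) \<longlonglongrightarrow> \<rho>" by (rule filterlim_compose[OF load sr_inf])
  have limIt: "(\<lambda>d. (1 / t (r d)) * I e (t (r d))) \<longlonglongrightarrow> \<pi> e" for e
    using filterlim_compose[OF env_prop[of e] tr_inf] by (simp add: I_def ind_def)
  have limIs: "(\<lambda>d. (1 / s (r d)) * I e (s (r d))) \<longlonglongrightarrow> \<pi> e" for e
    using filterlim_compose[OF env_prop[of e] sr_inf] by (simp add: I_def ind_def)
  define LHS where "LHS d = (X (t (r d)) /\<^sub>R t (r d)) \<bullet> w - ((X (s (r d)) /\<^sub>R s (r d)) \<bullet> w) * (s (r d) / t (r d))" for d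
  define RHS where "RHS d = (N (t (r d)) /\<^sub>R t (r d)) \<bullet> w - ((N (s (r d)) /\<^sub>R s (r d)) \<bullet> w) * (s (r d) / t (r d))
     - (\<Sum>e\<in>UNIV. m e * ((1 / t (r d)) * I e (t (r d)) - ((1 / s (r d)) * I e (s (r d))) * (s (r d) / t (r d))))" for d
  have ev: "eventually (\<lambda>d. 0 < s (r d)) sequentially"
    using sr_inf by (simp add: filterlim_at_top_dense)
  have evEq: "eventually (\<lambda>d. LHS d = RHS d) sequentially"
    using ev
  proof eventually_elim
    case (elim d)
    define a where "a = s (r d)"
    define b where "b = t (r d)"
    have a0: "a \<noteq> 0" using elim by (simp add: a_def)
    have b0: "b \<noteq> 0" using tnz by (simp add: b_def)
    have sc: "(v /\<^sub>R c) \<bullet> w = (v \<bullet> w) / c" for v :: "real^'q" and c :: real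
      by (simp add: divide_inverse mult.commute)
    have sc2: "(y / a) * (a / b) = y / b" for y :: real
      using a0 by simp
    have sc3: "(1 / a) * y * (a / b) = y / b" for y :: real
      using a0 by simp
    have "LHS d = (X b \<bullet> w) / b - (X a \<bullet> w) / b"
      by (simp only: LHS_def a_def[symmetric] b_def[symmetric] sc sc2)
    also have "\<dots> = (X b \<bullet> w - X a \<bullet> w) / b" by (rule diff_divide_distrib[symmetric])
    also have "\<dots> = (N b \<bullet> w - N a \<bullet> w - (\<Sum>e\<in>UNIV. m e * (I e b - I e a))) / b"
      using key[of "r d"] by (simp add: a_def b_def)
    also have "\<dots> = (N b \<bullet> w) / b - (N a \<bullet> w) / b - (\<Sum>e\<in>UNIV. m e * (I e b - I e a)) / b"
      by (simp only: diff_divide_distrib)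
    also have "(\<Sum>e\<in>UNIV. m e * (I e b - I e a)) / b = (\<Sum>e\<in>UNIV. m e * ((1 / b) * I e b - ((1 / a) * I e a) * (a / b)))"
      unfolding sum_divide_distrib sc3 by (intro sum.cong refl) (simp add: right_diff_distrib diff_divide_distrib)
    also have "(N b \<bullet> w) / b - (N a \<bullet> w) / b - (\<Sum>e\<in>UNIV. m e * ((1 / b) * I e b - ((1 / a) * I e a) * (a / b))) = RHS d"
      by (simp only: RHS_def a_def[symmetric] b_def[symmetric] sc sc2)
    finally show ?case .
  qed
  have limL: "LHS \<longlonglongrightarrow> \<eta> \<bullet> w - (\<psi> \<bullet> w) * (1 - \<epsilon>)"
    unfolding LHS_def by (intro tendsto_intros limXt limX str)
  have limR: "RHS \<longlonglongrightarrow> \<rho> \<bullet> w - (\<rho> \<bullet> w) * (1 - \<epsilon>) - (\<Sum>e\<in>UNIV. m e * (\<pi> e - \<pi> e * (1 - \<epsilon>)))"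
    unfolding RHS_def by (intro tendsto_intros limNt limNs str limIt limIs)
  have limL': "RHS \<longlonglongrightarrow> \<eta> \<bullet> w - (\<psi> \<bullet> w) * (1 - \<epsilon>)"
    using limL tendsto_cong[OF evEq] by simp
  have eqlim: "\<eta> \<bullet> w - (\<psi> \<bullet> w) * (1 - \<epsilon>) = \<rho> \<bullet> w - (\<rho> \<bullet> w) * (1 - \<epsilon>) - (\<Sum>e\<in>UNIV. m e * (\<pi> e - \<pi> e * (1 - \<epsilon>)))"
    by (rule LIMSEQ_unique[OF limL' limR])
  have reg: "\<rho> \<bullet> w \<le> (\<Sum>e\<in>UNIV. \<pi> e * m e)"
    unfolding m_def by (rule region_bound[OF Sset_finite Sset_complete less_imp_le[OF \<pi>_pos] \<rho>_stab])
  have sumeq: "(\<Sum>e\<in>UNIV. m e * (\<pi> e - \<pi> e * (1 - \<epsilon>))) = \<epsilon> * (\<Sum>e\<in>UNIV. \<pi> e * m e)"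
    by (simp add: sum_distrib_left algebra_simps)
  have etaw: "0 < \<eta> \<bullet> w" unfolding w_def by (rule B_posdef[OF \<eta>_nz])
  have k1: "\<eta> \<bullet> w \<le> (\<psi> \<bullet> w) * (1 - \<epsilon>)"
  proof -
    have "\<epsilon> * (\<rho> \<bullet> w) \<le> \<epsilon> * (\<Sum>e\<in>UNIV. \<pi> e * m e)" using reg \<epsilon>_range by simp
    then show ?thesis using eqlim sumeq by (simp add: algebra_simps)
  qed
  have psiw: "\<psi> \<bullet> w > \<eta> \<bullet> w"
  proof -
    have "0 < (\<psi> \<bullet> w) * (1 - \<epsilon>)" using k1 etaw by linarith
    then have pw: "0 < \<psi> \<bullet> w" using \<epsilon>_range by (simp add: zero_less_mult_iff)
    have "0 < \<epsilon> * (\<psi> \<bullet> w)" using pw \<epsilon>_range by simp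
    then show ?thesis using k1 by (simp add: algebra_simps)
  qed
  have psipsi: "\<psi> \<bullet> (B *v \<psi>) > \<eta> \<bullet> (B *v \<eta>)"
  proof -
    have psiw': "\<psi> \<bullet> (B *v \<eta>) > \<eta> \<bullet> (B *v \<eta>)" using psiw by (simp only: w_def)
    show ?thesis by (rule quad_ineq[OF B_sym B_posdef psiw'])
  qed
  have limf: "(\<lambda>d. (X (s (r d)) /\<^sub>R s (r d)) \<bullet> (B *v (X (s (r d)) /\<^sub>R s (r d)))) \<longlonglongrightarrow> \<psi> \<bullet> (B *v \<psi>)"
    by (intro tendsto_inner limX bounded_linear.tendsto[OF matrix_vector_mul_bounded_linear])
  have part2: "Limsup at_top (\<lambda>T. ereal ((X T /\<^sub>R T) \<bullet> (B *v (X T /\<^sub>R T)))) > ereal (\<eta> \<bullet> (B *v \<eta>))"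
    by (rule limsup_gt[OF limf sr_inf psipsi])
  show ?thesis
    using r psi_nn limX psiw psipsi part2 unfolding w_def by blast
qed


end
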